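(* Let $n,m,L\ge1$, $\alpha\in(0,1)$, $\beta\ge0$, $\rho\ge0$, and let data matrices $H\in\mathbb R^{n\times L}$, $H^+\in\mathbb R^{n\times L}$, $\Xi\in\mathbb R^{m\times L}$ be given. Define $$N_1:=\begin{bmatrix} I_n & H^+\\ 0 & -H\\ 0 & -\Xi\\ 0&0\\0&0\end{bmatrix}\begin{bmatrix}\beta I_n & 0\\ 0 & -I_L\end{bmatrix}\begin{bmatrix} I_n & H^+\\ 0 & -H\\ 0 & -\Xi\\ 0&0\\0&0\end{bmatrix}^{\!\top},\qquad N_2:=\begin{bmatrix} I_n&0&0\\0&0&0\\0&0&0\\0&I_n&0\\0&0&I_m\end{bmatrix}\begin{bmatrix}\rho^2 I_n&0&0\\0&-I_n&0\\0&0&-I_m\end{bmatrix}\begin{bmatrix} I_n&0&0\\0&0&0\\0&0&0\\0&I_n&0\\0&0&I_m\end{bmatrix}^{\!\top},$$ where the block rows have sizes $n,n,m,n,m$ (zero blocks sized accordingly), and let $\widetilde N_j:=\operatorname{diag}(N_j,0_{n\times n})$, $j=1,2$. For $P\in\mathbb R^{n\times n}$ symmetric, $L_K\in\mathbb R^{m\times n}$ and $\nu>0$, define the symmetric block matrix (block sizes $n,n,m,n,m,n$) $$S(P,L_K,\nu)=\begin{bmatrix} \alpha P-\nu I & 0 & 0 & 0 & 0 & 0\\ 0 & -P & -L_K^\top & -P & -L_K^\top & 0\\ 0 & -L_K & 0 & -L_K & 0 & L_K\\ 0 & -P & -L_K^\top & -P & -L_K^\top & 0\\ 0 & -L_K &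 0 & -L_K & 0 & L_K\\ 0 & 0 & L_K^\top & 0 & L_K^\top & P \end{bmatrix}.$$ Suppose there exist $\lambda_1,\lambda_2\ge0$, $\nu>0$, a symmetric positive definite $P\in\mathbb R^{n\times n}$ and $L_K\in\mathbb R^{m\times n}$ such that $$S(P,L_K,\nu)-\lambda_1\widetilde N_1-\lambda_2\widetilde N_2\succ0,$$ and set $K:=L_KP^{-1}$. Then for every pair $(A,B)\in\mathbb R^{n\times n}\times\mathbb R^{n\times m}$ for which there exists $W\in\mathbb R^{n\times L}$ with $H^+=AH+B\Xi+W$ and $WW^\top\preceq\beta I_n$, and every pair $(\Delta A,\Delta B)\in\mathbb R^{n\times n}\times\mathbb R^{n\times m}$ with $\Delta A\Delta A^\top+\Delta B\Delta B^\top\preceq\rho^2 I_n$, the closed-loop matrix $A_{\rm cl}:=A+BK+\Delta A+\Delta B\,K$ satisfies $$\alpha P-A_{\rm cl}\,P\,A_{\rm cl}^\top\succ0 .$$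
   Context: $\succ,\succeq,\preceq$ denote the Loewner order on symmetric matrices; $I_k$ is the $k\times k$ identity. In the paper, $(H,H^+,\Xi)=(H_{i-1},H_{i-1}^+,\Xi_{i-1})$ are the deviation data matrices collected on the previous segment, $\beta=\beta_{i-1}$ is the aggregated disturbance-energy bound, and $\rho=C\widetilde T_i$ is the Jacobian-variation bound. *)

theory Defs
  imports "Jordan_Normal_Form.Matrix"
begin

text \<open>Block matrices: row block sizes rs, column block sizes cs, blocks given
  as a list of block rows. Entry (i,j) is taken from the block containing it.\<close>

definition blk_idx :: "nat list \<Rightarrow> nat \<Rightarrow> nat" where
  "blk_idx rs i = (LEAST k. i < sum_list (take (Suc k) rs))"

definition block_mat :: "nat list \<Rightarrow> nat list \<Rightarrow> real mat list list \<Rightarrow> real mat" where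
  "block_mat rs cs Bs = mat (sum_list rs) (sum_list cs)
     (\<lambda>(i,j). let a = blk_idx rs i; b = blk_idx cs j
              in (Bs ! a ! b) $$ (i - sum_list (take a rs), j - sum_list (take b cs)))"

definition psd_mat :: "nat \<Rightarrow> real mat \<Rightarrow> bool" where
  "psd_mat k M \<longleftrightarrow> M \<in> carrier_mat k k \<and> M\<^sup>T = M \<and>
     (\<forall>x \<in> carrier_vec k. x \<bullet> (M *\<^sub>v x) \<ge> 0)"

definition pd_mat :: "nat \<Rightarrow> real mat \<Rightarrow> bool" where
  "pd_mat k M \<longleftrightarrow> M \<in> carrier_mat k k \<and> M\<^sup>T = M \<and>
     (\<forall>x \<in> carrier_vec k. x \<noteq> 0\<^sub>v k \<longrightarrow> x \<bullet> (M *\<^sub>v x) > 0)"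

definition N1_mat :: "nat \<Rightarrow> nat \<Rightarrow> nat \<Rightarrow> real \<Rightarrow> real mat \<Rightarrow> real mat \<Rightarrow> real mat \<Rightarrow> real mat" where
  "N1_mat n m L \<beta> H Hp Xi =
    (let F = block_mat [n,n,m,n,m] [n,L]
               [[1\<^sub>m n, Hp],
                [0\<^sub>m n n, -H],
                [0\<^sub>m m n, -Xi],
                [0\<^sub>m n n, 0\<^sub>m n L],
                [0\<^sub>m m n, 0\<^sub>m m L]];
         D = block_mat [n,L] [n,L]
               [[\<beta> \<cdot>\<^sub>m 1\<^sub>m n, 0\<^sub>m n L],
                [0\<^sub>m L n, -(1\<^sub>m L)]]
     in F * D * F\<^sup>T)"

definition N2_mat :: "nat \<Rightarrow> nat \<Rightarrow> real \<Rightarrow> real mat" where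
  "N2_mat n m \<rho> =
    (let F = block_mat [n,n,m,n,m] [n,n,m]
               [[1\<^sub>m n, 0\<^sub>m n n, 0\<^sub>m n m],
                [0\<^sub>m n n, 0\<^sub>m n n, 0\<^sub>m n m],
                [0\<^sub>m m n, 0\<^sub>m m n, 0\<^sub>m m m],
                [0\<^sub>m n n, 1\<^sub>m n, 0\<^sub>m n m],
                [0\<^sub>m m n, 0\<^sub>m m n, 1\<^sub>m m]];
         D = block_mat [n,n,m] [n,n,m]
               [[\<rho>\<^sup>2 \<cdot>\<^sub>m 1\<^sub>m n, 0\<^sub>m n n, 0\<^sub>m n m],
                [0\<^sub>m n n, -(1\<^sub>m n), 0\<^sub>m n m],
                [0\<^sub>m m n, 0\<^sub>m m n, -(1\<^sub>m m)]]
     in F * D * F\<^sup>T)"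

definition pad_mat :: "nat \<Rightarrow> nat \<Rightarrow> real mat \<Rightarrow> real mat" where
  "pad_mat n m N = block_mat [3*n+2*m, n] [3*n+2*m, n]
     [[N, 0\<^sub>m (3*n+2*m) n], [0\<^sub>m n (3*n+2*m), 0\<^sub>m n n]]"

definition S_mat :: "nat \<Rightarrow> nat \<Rightarrow> real \<Rightarrow> real mat \<Rightarrow> real mat \<Rightarrow> real \<Rightarrow> real mat" where
  "S_mat n m \<alpha> P LK \<nu> = block_mat [n,n,m,n,m,n] [n,n,m,n,m,n]
     [[\<alpha> \<cdot>\<^sub>m P - \<nu> \<cdot>\<^sub>m 1\<^sub>m n, 0\<^sub>m n n, 0\<^sub>m n m, 0\<^sub>m n n, 0\<^sub>m n m, 0\<^sub>m n n],
      [0\<^sub>m n n, -P, -(LK\<^sup>T), -P, -(LK\<^sup>T), 0\<^sub>m n n],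
      [0\<^sub>m m n, -LK, 0\<^sub>m m m, -LK, 0\<^sub>m m m, LK],
      [0\<^sub>m n n, -P, -(LK\<^sup>T), -P, -(LK\<^sup>T), 0\<^sub>m n n],
      [0\<^sub>m m n, -LK, 0\<^sub>m m m, -LK, 0\<^sub>m m m, LK],
      [0\<^sub>m n n, 0\<^sub>m n n, LK\<^sup>T, 0\<^sub>m n n, LK\<^sup>T, P]]"

end

theory Submission
  imports Defs
begin


definition offs :: "nat list \<Rightarrow> nat \<Rightarrow> nat" where "offs rs a = sum_list (take a rs)"
definition blk :: "nat list \<Rightarrow> real vec \<Rightarrow> nat \<Rightarrow> real vec" where
  "blk rs z a = vec (rs!a) (\<lambda>i. z $ (offs rs a + i))"
definition vcat :: "nat list \<Rightarrow> real vec list \<Rightarrow> real vec" where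
  "vcat rs xs = vec (sum_list rs) (\<lambda>i. xs ! (blk_idx rs i) $ (i - offs rs (blk_idx rs i)))"
definition wfb :: "nat list \<Rightarrow> nat list \<Rightarrow> real mat list list \<Rightarrow> bool" where
  "wfb rs cs Bs = list_all2 (\<lambda>r row. list_all2 (\<lambda>c B. B \<in> carrier_mat r c) cs row) rs Bs"

lemma wfb_nth: "wfb rs cs Bs \<Longrightarrow> a < length rs \<Longrightarrow> b < length cs \<Longrightarrow> Bs!a!b \<in> carrier_mat (rs!a) (cs!b)"
  unfolding wfb_def list_all2_conv_all_nth by auto

lemma sum_take_mono: "(j::nat) \<le> a \<Longrightarrow> sum_list (take j rs) \<le> sum_list (take a (rs::nat list))"
proof -
  assume "j \<le> a"
  then obtain d where "a = j + d" using le_Suc_ex by blast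
  then show ?thesis by (simp add: take_add)
qed

lemma off_Suc: "a < length rs \<Longrightarrow> sum_list (take (Suc a) rs) = offs rs a + rs!a"
  by (simp add: offs_def take_Suc_conv_app_nth)

lemma off_le_sum: "a < length rs \<Longrightarrow> offs rs a + rs!a \<le> sum_list rs"
proof -
  assume a: "a < length rs"
  have "sum_list (take (Suc a) rs) \<le> sum_list (take (length rs) rs)"
    using a by (intro sum_take_mono) auto
  then show ?thesis using off_Suc[OF a] by simp
qed

lemma blk_idx_off: assumes "a < length rs" "i < rs!a" shows "blk_idx rs (offs rs a + i) = a"
  unfolding blk_idx_def
proof (rule Least_equality)
  show "offs rs a + i < sum_list (take (Suc a) rs)" using assms off_Suc by simp
next
  fix k assume k: "offs rs a + i < sum_list (take (Suc k) rs)"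
  show "a \<le> k"
  proof (rule ccontr)
    assume "\<not> a \<le> k"
    then have "sum_list (take (Suc k) rs) \<le> offs rs a" unfolding offs_def by (intro sum_take_mono) auto
    with k show False by simp
  qed
qed

lemma sum_lessThan_add_nat: "(\<Sum>i<s+(r::nat). f i) = (\<Sum>i<s. f i) + (\<Sum>i<r. f (s + i))"
  by (induction r) (auto simp: add.assoc)

lemma split_sum: "(\<Sum>i<sum_list rs. f i) = (\<Sum>a<length rs. \<Sum>i<rs!a. f (offs rs a + i))"
proof (induction rs rule: rev_induct)
  case Nil then show ?case by simp
next
  case (snoc r rs)
  have "(\<Sum>i<sum_list (rs@[r]). f i) = (\<Sum>i<sum_list rs. f i) + (\<Sum>i<r. f (sum_list rs + i))"
    by (simp add: sum_lessThan_add_nat)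
  also have "(\<Sum>i<sum_list rs. f i) = (\<Sum>a<length rs. \<Sum>i<(rs@[r])!a. f (offs (rs@[r]) a + i))"
    unfolding snoc by (intro sum.cong refl) (auto simp add: offs_def nth_append take_append)
  finally show ?case by (simp add: offs_def)
qed

lemma decomp: "i < sum_list rs \<Longrightarrow> \<exists>a j. a < length rs \<and> j < rs!a \<and> i = offs rs a + j"
proof (induction rs rule: rev_induct)
  case Nil then show ?case by simp
next
  case (snoc r rs)
  show ?case
  proof (cases "i < sum_list rs")
    case True
    then obtain a j where "a < length rs" "j < rs!a" "i = offs rs a + j" using snoc by blast
    then show ?thesis by (intro exI[of _ a] exI[of _ j]) (auto simp: offs_def nth_append)
  next
    case False
    then show ?thesis using snoc.prems
      by (intro exI[of _ "length rs"] exI[of _ "i - sum_list rs"]) (auto simp: offs_def)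
  qed
qed

lemma blk_idx_props: assumes "i < sum_list rs"
  shows "blk_idx rs i < length rs" "offs rs (blk_idx rs i) \<le> i" "i - offs rs (blk_idx rs i) < rs ! blk_idx rs i"
  using decomp[OF assms] blk_idx_off by auto

lemma vcat_idx: assumes "a < length rs" "i < rs!a"
  shows "vcat rs xs $ (offs rs a + i) = xs!a $ i"
proof -
  have "offs rs a + i < sum_list rs" using off_le_sum[OF assms(1)] assms(2) by simp
  then show ?thesis unfolding vcat_def using blk_idx_off[OF assms] by simp
qed

lemma vcat_carrier[simp]: "vcat rs xs \<in> carrier_vec (sum_list rs)"
  unfolding vcat_def by simp

lemma blk_carrier[simp]: "blk rs z a \<in> carrier_vec (rs!a)" unfolding blk_def by simp
lemma dim_blk[simp]: "dim_vec (blk rs z a) = rs!a" unfolding blk_def by simp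

lemma blk_vcat: assumes "a < length rs" "xs!a \<in> carrier_vec (rs!a)"
  shows "blk rs (vcat rs xs) a = xs!a"
  using assms by (intro eq_vecI) (auto simp: blk_def vcat_idx)

lemma dot_split: assumes "y \<in> carrier_vec (sum_list rs)" "w \<in> carrier_vec (sum_list rs)"
  shows "y \<bullet> w = (\<Sum>a<length rs. blk rs y a \<bullet> blk rs w a)"
proof -
  have "y \<bullet> w = (\<Sum>i<sum_list rs. y$i * w$i)" using assms by (simp add: scalar_prod_def atLeast0LessThan)
  also have "\<dots> = (\<Sum>a<length rs. \<Sum>i<rs!a. y$(offs rs a + i) * w$(offs rs a + i))" by (rule split_sum)
  also have "\<dots> = (\<Sum>a<length rs. blk rs y a \<bullet> blk rs w a)"
    by (intro sum.cong refl) (simp add: scalar_prod_def blk_def atLeast0LessThan)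
  finally show ?thesis .
qed

lemma block_mat_carrier[simp]: "block_mat rs cs Bs \<in> carrier_mat (sum_list rs) (sum_list cs)"
  unfolding block_mat_def by simp
lemma dim_block_mat[simp]: "dim_row (block_mat rs cs Bs) = sum_list rs" "dim_col (block_mat rs cs Bs) = sum_list cs"
  unfolding block_mat_def by simp_all

lemma block_mat_idx: assumes "a < length rs" "i < rs!a" "b < length cs" "j < cs!b"
  shows "block_mat rs cs Bs $$ (offs rs a + i, offs cs b + j) = Bs!a!b $$ (i,j)"
proof -
  have "offs rs a + i < sum_list rs" using off_le_sum[OF assms(1)] assms(2) by simp
  moreover have "offs cs b + j < sum_list cs" using off_le_sum[OF assms(3)] assms(4) by simp
  ultimately show ?thesis unfolding block_mat_def
    using blk_idx_off[OF assms(1,2)] blk_idx_off[OF assms(3,4)] by (simp add: offs_def)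
qed

lemma blk_mult: assumes wf: "wfb rs cs Bs" and x: "x \<in> carrier_vec (sum_list cs)" and a: "a < length rs"
  shows "blk rs (block_mat rs cs Bs *\<^sub>v x) a = vec (rs!a) (\<lambda>i. \<Sum>b<length cs. (Bs!a!b *\<^sub>v blk cs x b) $ i)"
proof (rule eq_vecI)
  fix i assume "i < dim_vec (vec (rs!a) (\<lambda>i. \<Sum>b<length cs. (Bs!a!b *\<^sub>v blk cs x b) $ i))"
  then have i: "i < rs!a" by simp
  have ii: "offs rs a + i < sum_list rs" using off_le_sum[OF a] i by simp
  have "blk rs (block_mat rs cs Bs *\<^sub>v x) a $ i = row (block_mat rs cs Bs) (offs rs a + i) \<bullet> x"
    using ii i by (simp add: blk_def)
  also have "\<dots> = (\<Sum>j<sum_list cs. block_mat rs cs Bs $$ (offs rs a + i, j) * x$j)"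
    using x ii by (simp add: scalar_prod_def atLeast0LessThan)
  also have "\<dots> = (\<Sum>b<length cs. \<Sum>j<cs!b. block_mat rs cs Bs $$ (offs rs a + i, offs cs b + j) * x$(offs cs b + j))"
    by (rule split_sum)
  also have "\<dots> = (\<Sum>b<length cs. (Bs!a!b *\<^sub>v blk cs x b) $ i)"
  proof (intro sum.cong refl)
    fix b assume b: "b \<in> {..<length cs}"
    have B: "Bs!a!b \<in> carrier_mat (rs!a) (cs!b)" using wfb_nth[OF wf a] b by simp
    show "(\<Sum>j<cs!b. block_mat rs cs Bs $$ (offs rs a + i, offs cs b + j) * x$(offs cs b + j)) = (Bs!a!b *\<^sub>v blk cs x b) $ i"
      using B i b a by (simp add: block_mat_idx scalar_prod_def atLeast0LessThan blk_def)
  qed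
  finally show "blk rs (block_mat rs cs Bs *\<^sub>v x) a $ i = vec (rs!a) (\<lambda>i. \<Sum>b<length cs. (Bs!a!b *\<^sub>v blk cs x b) $ i) $ i"
    using i by simp
qed simp

definition tblocks :: "nat list \<Rightarrow> nat list \<Rightarrow> real mat list list \<Rightarrow> real mat list list" where
  "tblocks rs cs Bs = map (\<lambda>b. map (\<lambda>a. (Bs!a!b)\<^sup>T) [0..<length rs]) [0..<length cs]"

lemma wfb_t: "wfb rs cs Bs \<Longrightarrow> wfb cs rs (tblocks rs cs Bs)"
  unfolding wfb_def tblocks_def list_all2_conv_all_nth by auto

lemma block_mat_transpose: assumes wf: "wfb rs cs Bs"
  shows "(block_mat rs cs Bs)\<^sup>T = block_mat cs rs (tblocks rs cs Bs)"
proof (rule eq_matI)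
  fix j i assume "j < dim_row (block_mat cs rs (tblocks rs cs Bs))" "i < dim_col (block_mat cs rs (tblocks rs cs Bs))"
  then have j: "j < sum_list cs" and i: "i < sum_list rs" by simp_all
  obtain a i' where a: "a < length rs" "i' < rs!a" "i = offs rs a + i'" using decomp[OF i] by blast
  obtain b j' where b: "b < length cs" "j' < cs!b" "j = offs cs b + j'" using decomp[OF j] by blast
  have B: "Bs!a!b \<in> carrier_mat (rs!a) (cs!b)" using wfb_nth[OF wf a(1) b(1)] .
  show "(block_mat rs cs Bs)\<^sup>T $$ (j, i) = block_mat cs rs (tblocks rs cs Bs) $$ (j, i)"
    using a b i j B by (simp add: block_mat_idx tblocks_def)
qed auto

lemma smult_mat_vec: "A \<in> carrier_mat nr nc \<Longrightarrow> v \<in> carrier_vec nc \<Longrightarrow> (k \<cdot>\<^sub>m A) *\<^sub>v v = k \<cdot>\<^sub>v (A *\<^sub>v (v::real vec))"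
  by (intro eq_vecI) auto



lemma bilin: assumes wf: "wfb rs cs Bs" and y: "y \<in> carrier_vec (sum_list rs)" and x: "x \<in> carrier_vec (sum_list cs)"
  shows "y \<bullet> (block_mat rs cs Bs *\<^sub>v x) = (\<Sum>a<length rs. \<Sum>b<length cs. blk rs y a \<bullet> (Bs!a!b *\<^sub>v blk cs x b))"
proof -
  have "y \<bullet> (block_mat rs cs Bs *\<^sub>v x) = (\<Sum>a<length rs. blk rs y a \<bullet> blk rs (block_mat rs cs Bs *\<^sub>v x) a)"
    by (rule dot_split[OF y], intro carrier_vecI) simp
  also have "\<dots> = (\<Sum>a<length rs. \<Sum>b<length cs. blk rs y a \<bullet> (Bs!a!b *\<^sub>v blk cs x b))"
  proof (intro sum.cong refl)
    fix a assume a: "a \<in> {..<length rs}"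
    have "blk rs y a \<bullet> blk rs (block_mat rs cs Bs *\<^sub>v x) a
       = (\<Sum>i<rs!a. blk rs y a $ i * (\<Sum>b<length cs. (Bs!a!b *\<^sub>v blk cs x b) $ i))"
      using blk_mult[OF wf x] a by (simp add: scalar_prod_def atLeast0LessThan)
    also have "\<dots> = (\<Sum>b<length cs. \<Sum>i<rs!a. blk rs y a $ i * (Bs!a!b *\<^sub>v blk cs x b) $ i)"
      unfolding sum_distrib_left by (rule sum.swap)
    also have "\<dots> = (\<Sum>b<length cs. blk rs y a \<bullet> (Bs!a!b *\<^sub>v blk cs x b))"
    proof (intro sum.cong refl)
      fix b assume b: "b \<in> {..<length cs}"
      have B: "Bs!a!b \<in> carrier_mat (rs!a) (cs!b)" using wfb_nth[OF wf] a b by simp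
      show "(\<Sum>i<rs!a. blk rs y a $ i * (Bs!a!b *\<^sub>v blk cs x b) $ i) = blk rs y a \<bullet> (Bs!a!b *\<^sub>v blk cs x b)"
        using B by (simp add: scalar_prod_def atLeast0LessThan)
    qed
    finally show "blk rs y a \<bullet> blk rs (block_mat rs cs Bs *\<^sub>v x) a = (\<Sum>b<length cs. blk rs y a \<bullet> (Bs!a!b *\<^sub>v blk cs x b))" .
  qed
  finally show ?thesis .
qed

lemma blk_vcat2: assumes a: "a < Suc (length rs)" and xs: "list_all2 (\<lambda>r x. x \<in> carrier_vec r) rs xs"
  and y: "y \<in> carrier_vec k"
  shows "blk (rs@[k]) (vcat [sum_list rs, k] [vcat rs xs, y]) a = (xs@[y])!a"
proof -
  have len: "length xs = length rs" using xs list_all2_lengthD by metis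
  show ?thesis
  proof (cases "a < length rs")
    case True
    have xa: "xs!a \<in> carrier_vec (rs!a)" using xs True unfolding list_all2_conv_all_nth by auto
    show ?thesis
    proof (rule eq_vecI)
      fix i assume "i < dim_vec ((xs@[y])!a)"
      then have i: "i < rs!a" using xa True len by (simp add: nth_append)
      have o: "offs (rs@[k]) a = offs rs a" using True by (simp add: offs_def take_append)
      have lt: "offs rs a + i < sum_list rs" using off_le_sum[OF True] i by simp
      have "vcat [sum_list rs, k] [vcat rs xs, y] $ (offs [sum_list rs, k] 0 + (offs rs a + i)) = [vcat rs xs, y] ! 0 $ (offs rs a + i)"
        by (rule vcat_idx) (use lt in auto)
      then have "vcat [sum_list rs, k] [vcat rs xs, y] $ (offs rs a + i) = xs!a $ i"
        using vcat_idx[OF True i] by (simp add: offs_def)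
      then show "blk (rs@[k]) (vcat [sum_list rs, k] [vcat rs xs, y]) a $ i = (xs@[y])!a $ i"
        using o i True len by (simp add: blk_def nth_append)
    qed (use xa True len in \<open>simp add: nth_append\<close>)
  next
    case False
    then have aa: "a = length rs" using a by simp
    show ?thesis
    proof (rule eq_vecI)
      fix i assume "i < dim_vec ((xs@[y])!a)"
      then have i: "i < k" using y aa len by (simp add: nth_append)
      have o: "offs (rs@[k]) a = sum_list rs" using aa by (simp add: offs_def)
      have "vcat [sum_list rs, k] [vcat rs xs, y] $ (offs [sum_list rs, k] 1 + i) = [vcat rs xs, y] ! 1 $ i"
        by (rule vcat_idx) (use i in auto)
      then show "blk (rs@[k]) (vcat [sum_list rs, k] [vcat rs xs, y]) a $ i = (xs@[y])!a $ i"
        using o i aa len by (simp add: blk_def nth_append offs_def)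
    qed (use y aa len in \<open>simp add: nth_append\<close>)
  qed
qed

lemma zero_mat_vec[simp]: "v \<in> carrier_vec c \<Longrightarrow> 0\<^sub>m r c *\<^sub>v v = (0\<^sub>v r :: real vec)"
  by (intro eq_vecI) auto



lemma QN1:
  fixes x a1 b1 a2 b2 :: "real vec"
  assumes x: "x \<in> carrier_vec n" and A: "A \<in> carrier_mat n n" and B: "B \<in> carrier_mat n m"
    and H: "H \<in> carrier_mat n L" and Hp: "Hp \<in> carrier_mat n L" and Xi: "Xi \<in> carrier_mat m L"
    and W: "W \<in> carrier_mat n L" and HW: "Hp = A * H + B * Xi + W"
    and psd: "psd_mat n (\<beta> \<cdot>\<^sub>m 1\<^sub>m n - W * W\<^sup>T)"
    and a1: "a1 = A\<^sup>T *\<^sub>v x" and b1: "b1 = B\<^sup>T *\<^sub>v x"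
    and a2: "a2 \<in> carrier_vec n" and b2: "b2 \<in> carrier_vec m"
  shows "vcat [n,n,m,n,m] [x,a1,b1,a2,b2] \<bullet> (N1_mat n m L \<beta> H Hp Xi *\<^sub>v vcat [n,n,m,n,m] [x,a1,b1,a2,b2]) \<ge> 0"
proof -
  define v where "v = vcat [n,n,m,n,m] [x,a1,b1,a2,b2]"
  define FB where "FB = [[1\<^sub>m n, Hp], [0\<^sub>m n n, -H], [0\<^sub>m m n, -Xi], [0\<^sub>m n n, 0\<^sub>m n L], [0\<^sub>m m n, 0\<^sub>m m L :: real mat]]"
  define DB where "DB = [[\<beta> \<cdot>\<^sub>m 1\<^sub>m n, 0\<^sub>m n L], [0\<^sub>m L n, -(1\<^sub>m L) :: real mat]]"
  define F where "F = block_mat [n,n,m,n,m] [n,L] FB"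
  define D where "D = block_mat [n,L] [n,L] DB"
  have N1: "N1_mat n m L \<beta> H Hp Xi = F * D * F\<^sup>T"
    by (simp add: N1_mat_def F_def D_def FB_def DB_def Let_def)
  have wfF: "wfb [n,n,m,n,m] [n,L] FB" using H Hp Xi by (simp add: wfb_def FB_def)
  have wfD: "wfb [n,L] [n,L] DB" by (simp add: wfb_def DB_def)
  have a1c: "a1 \<in> carrier_vec n" and b1c: "b1 \<in> carrier_vec m" using a1 b1 A B x by auto
  have vc: "v \<in> carrier_vec (sum_list [n,n,m,n,m])" unfolding v_def by (rule vcat_carrier)
  have Fc: "F \<in> carrier_mat (sum_list [n,n,m,n,m]) (sum_list [n,L])" unfolding F_def by (rule block_mat_carrier)
  have Dc: "D \<in> carrier_mat (sum_list [n,L]) (sum_list [n,L])" unfolding D_def by (rule block_mat_carrier)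
  define g where "g = F\<^sup>T *\<^sub>v v"
  have gc: "g \<in> carrier_vec (sum_list [n,L])" unfolding g_def using Fc vc by simp
  have "v \<bullet> (N1_mat n m L \<beta> H Hp Xi *\<^sub>v v) = v \<bullet> (F *\<^sub>v (D *\<^sub>v g))"
  proof -
    have FT: "F\<^sup>T \<in> carrier_mat (sum_list [n,L]) (sum_list [n,n,m,n,m])" using Fc by simp
    have "(F * D * F\<^sup>T) *\<^sub>v v = (F * D) *\<^sub>v (F\<^sup>T *\<^sub>v v)"
      by (rule assoc_mult_mat_vec[OF mult_carrier_mat[OF Fc Dc] FT vc])
    also have "\<dots> = F *\<^sub>v (D *\<^sub>v (F\<^sup>T *\<^sub>v v))"
      by (rule assoc_mult_mat_vec[OF Fc Dc]) (use FT vc in simp)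
    finally show ?thesis unfolding N1 g_def by simp
  qed
  also have "\<dots> = g \<bullet> (D *\<^sub>v g)"
    unfolding g_def using Fc Dc vc gc by (subst transpose_vec_mult_scalar[of F]) (auto simp del: sum_list.Cons simp: g_def)
  also have "\<dots> = (\<Sum>a<length [n,L]. \<Sum>b<length [n,L]. blk [n,L] g a \<bullet> (DB!a!b *\<^sub>v blk [n,L] g b))"
    unfolding D_def by (rule bilin[OF wfD gc gc])
  finally have e1: "v \<bullet> (N1_mat n m L \<beta> H Hp Xi *\<^sub>v v) = (\<Sum>a<length [n,L]. \<Sum>b<length [n,L]. blk [n,L] g a \<bullet> (DB!a!b *\<^sub>v blk [n,L] g b))" .
  have blkv: "blk [n,n,m,n,m] v b = [x,a1,b1,a2,b2]!b" if "b < 5" for b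
    unfolding v_def using that x a1c b1c a2 b2 by (intro blk_vcat) (auto simp: nth_Cons')
  have gF: "g = block_mat [n,L] [n,n,m,n,m] (tblocks [n,n,m,n,m] [n,L] FB) *\<^sub>v v"
    unfolding g_def F_def by (simp only: block_mat_transpose[OF wfF])
  have g0: "blk [n,L] g 0 = x"
    unfolding gF
    apply (subst blk_mult[OF wfb_t[OF wfF] vc], simp)
    apply (simp add: tblocks_def blkv FB_def)
    apply (intro eq_vecI) using x a1c b1c a2 b2 apply auto
    done
  have AH: "A * H \<in> carrier_mat n L" and BX: "B * Xi \<in> carrier_mat n L" using A H B Xi by auto
  have HpT0: "Hp\<^sup>T = H\<^sup>T * A\<^sup>T + Xi\<^sup>T * B\<^sup>T + W\<^sup>T"
    unfolding HW
    by (simp add: transpose_add[OF add_carrier_mat[OF BX] W] transpose_add[OF AH BX]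
          transpose_mult[OF A H] transpose_mult[OF B Xi])
  have HpT: "Hp\<^sup>T *\<^sub>v x = H\<^sup>T *\<^sub>v a1 + Xi\<^sup>T *\<^sub>v b1 + W\<^sup>T *\<^sub>v x"
  proof -
    have c1: "H\<^sup>T * A\<^sup>T \<in> carrier_mat L n" "Xi\<^sup>T * B\<^sup>T \<in> carrier_mat L n" "W\<^sup>T \<in> carrier_mat L n"
      using A B H Xi W by auto
    have "Hp\<^sup>T *\<^sub>v x = (H\<^sup>T * A\<^sup>T) *\<^sub>v x + (Xi\<^sup>T * B\<^sup>T) *\<^sub>v x + W\<^sup>T *\<^sub>v x"
      unfolding HpT0 add_mult_distrib_mat_vec[OF add_carrier_mat[OF c1(2)] c1(3) x] add_mult_distrib_mat_vec[OF c1(1,2) x] ..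
    also have "\<dots> = H\<^sup>T *\<^sub>v a1 + Xi\<^sup>T *\<^sub>v b1 + W\<^sup>T *\<^sub>v x"
    proof -
      have t: "H\<^sup>T \<in> carrier_mat L n" "A\<^sup>T \<in> carrier_mat n n" "Xi\<^sup>T \<in> carrier_mat L m" "B\<^sup>T \<in> carrier_mat m n"
        using A B H Xi by auto
      show ?thesis unfolding a1 b1 assoc_mult_mat_vec[OF t(1,2) x] assoc_mult_mat_vec[OF t(3,4) x] ..
    qed
    finally show ?thesis .
  qed
  have g1: "blk [n,L] g 1 = W\<^sup>T *\<^sub>v x"
    unfolding gF
    apply (subst blk_mult[OF wfb_t[OF wfF] vc], simp)
    apply (simp add: tblocks_def blkv FB_def)
    apply (intro eq_vecI) using x a1c b1c a2 b2 H Xi W apply (auto simp: HpT transpose_uminus)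
    done
  have wx: "W\<^sup>T *\<^sub>v x \<in> carrier_vec L" using W x by simp
  have q: "v \<bullet> (N1_mat n m L \<beta> H Hp Xi *\<^sub>v v) = \<beta> * (x \<bullet> x) - (W\<^sup>T *\<^sub>v x) \<bullet> (W\<^sup>T *\<^sub>v x)"
    unfolding e1 using x wx W by (simp add: uminus_mult_mat_vec DB_def g0 g1[unfolded One_nat_def] smult_mat_vec[of _ n n])
  have p: "x \<bullet> ((\<beta> \<cdot>\<^sub>m 1\<^sub>m n - W * W\<^sup>T) *\<^sub>v x) = \<beta> * (x \<bullet> x) - (W\<^sup>T *\<^sub>v x) \<bullet> (W\<^sup>T *\<^sub>v x)"
  proof -
    have c: "\<beta> \<cdot>\<^sub>m 1\<^sub>m n \<in> carrier_mat n n" "W * W\<^sup>T \<in> carrier_mat n n" "W\<^sup>T \<in> carrier_mat L n" using W by auto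
    have "(\<beta> \<cdot>\<^sub>m 1\<^sub>m n - W * W\<^sup>T) *\<^sub>v x = \<beta> \<cdot>\<^sub>v x - W *\<^sub>v (W\<^sup>T *\<^sub>v x)"
      unfolding minus_mult_distrib_mat_vec[OF c(1,2) x] assoc_mult_mat_vec[OF W c(3) x]
      using smult_mat_vec[OF one_carrier_mat x, of \<beta>] x by simp
    then have "x \<bullet> ((\<beta> \<cdot>\<^sub>m 1\<^sub>m n - W * W\<^sup>T) *\<^sub>v x) = x \<bullet> (\<beta> \<cdot>\<^sub>v x) - x \<bullet> (W *\<^sub>v (W\<^sup>T *\<^sub>v x))"
      using x W wx by (simp add: scalar_prod_minus_distrib[of x n])
    also have "x \<bullet> (W *\<^sub>v (W\<^sup>T *\<^sub>v x)) = (W\<^sup>T *\<^sub>v x) \<bullet> (W\<^sup>T *\<^sub>v x)"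
      using transpose_vec_mult_scalar[OF W wx x] by simp
    finally show ?thesis using x by simp
  qed
  have "x \<bullet> ((\<beta> \<cdot>\<^sub>m 1\<^sub>m n - W * W\<^sup>T) *\<^sub>v x) \<ge> 0" using psd x unfolding psd_mat_def by blast
  then show ?thesis using p q unfolding v_def by simp
qed


lemma QN2:
  fixes x a1 b1 a2 b2 :: "real vec"
  assumes x: "x \<in> carrier_vec n" and dA: "dA \<in> carrier_mat n n" and dB: "dB \<in> carrier_mat n m"
    and psd: "psd_mat n (\<rho>\<^sup>2 \<cdot>\<^sub>m 1\<^sub>m n - (dA * dA\<^sup>T + dB * dB\<^sup>T))"
    and a2: "a2 = dA\<^sup>T *\<^sub>v x" and b2: "b2 = dB\<^sup>T *\<^sub>v x"
    and a1c: "a1 \<in> carrier_vec n" and b1c: "b1 \<in> carrier_vec m"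
  shows "vcat [n,n,m,n,m] [x,a1,b1,a2,b2] \<bullet> (N2_mat n m \<rho> *\<^sub>v vcat [n,n,m,n,m] [x,a1,b1,a2,b2]) \<ge> 0"
proof -
  define v where "v = vcat [n,n,m,n,m] [x,a1,b1,a2,b2]"
  define FB where "FB = [[1\<^sub>m n, 0\<^sub>m n n, 0\<^sub>m n m],
                [0\<^sub>m n n, 0\<^sub>m n n, 0\<^sub>m n m],
                [0\<^sub>m m n, 0\<^sub>m m n, 0\<^sub>m m m],
                [0\<^sub>m n n, 1\<^sub>m n, 0\<^sub>m n m],
                [0\<^sub>m m n, 0\<^sub>m m n, 1\<^sub>m m :: real mat]]"
  define DB where "DB = [[\<rho>\<^sup>2 \<cdot>\<^sub>m 1\<^sub>m n, 0\<^sub>m n n, 0\<^sub>m n m],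
                [0\<^sub>m n n, -(1\<^sub>m n), 0\<^sub>m n m],
                [0\<^sub>m m n, 0\<^sub>m m n, -(1\<^sub>m m) :: real mat]]"
  define F where "F = block_mat [n,n,m,n,m] [n,n,m] FB"
  define D where "D = block_mat [n,n,m] [n,n,m] DB"
  have N2: "N2_mat n m \<rho> = F * D * F\<^sup>T"
    by (simp add: N2_mat_def F_def D_def FB_def DB_def Let_def)
  have wfF: "wfb [n,n,m,n,m] [n,n,m] FB" by (simp add: wfb_def FB_def)
  have wfD: "wfb [n,n,m] [n,n,m] DB" by (simp add: wfb_def DB_def)
  have a2c: "a2 \<in> carrier_vec n" and b2c: "b2 \<in> carrier_vec m" using a2 b2 dA dB x by auto
  have vc: "v \<in> carrier_vec (sum_list [n,n,m,n,m])" unfolding v_def by (rule vcat_carrier)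
  have Fc: "F \<in> carrier_mat (sum_list [n,n,m,n,m]) (sum_list [n,n,m])" unfolding F_def by (rule block_mat_carrier)
  have Dc: "D \<in> carrier_mat (sum_list [n,n,m]) (sum_list [n,n,m])" unfolding D_def by (rule block_mat_carrier)
  define g where "g = F\<^sup>T *\<^sub>v v"
  have gc: "g \<in> carrier_vec (sum_list [n,n,m])" unfolding g_def using Fc vc by simp
  have "v \<bullet> (N2_mat n m \<rho> *\<^sub>v v) = v \<bullet> (F *\<^sub>v (D *\<^sub>v g))"
  proof -
    have FT: "F\<^sup>T \<in> carrier_mat (sum_list [n,n,m]) (sum_list [n,n,m,n,m])" using Fc by simp
    have "(F * D * F\<^sup>T) *\<^sub>v v = (F * D) *\<^sub>v (F\<^sup>T *\<^sub>v v)"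
      by (rule assoc_mult_mat_vec[OF mult_carrier_mat[OF Fc Dc] FT vc])
    also have "\<dots> = F *\<^sub>v (D *\<^sub>v (F\<^sup>T *\<^sub>v v))"
      by (rule assoc_mult_mat_vec[OF Fc Dc]) (use FT vc in simp)
    finally show ?thesis unfolding N2 g_def by simp
  qed
  also have "\<dots> = g \<bullet> (D *\<^sub>v g)"
    unfolding g_def using Fc Dc vc gc by (subst transpose_vec_mult_scalar[of F]) (auto simp del: sum_list.Cons simp: g_def)
  also have "\<dots> = (\<Sum>a<length [n,n,m]. \<Sum>b<length [n,n,m]. blk [n,n,m] g a \<bullet> (DB!a!b *\<^sub>v blk [n,n,m] g b))"
    unfolding D_def by (rule bilin[OF wfD gc gc])
  finally have e1: "v \<bullet> (N2_mat n m \<rho> *\<^sub>v v) = (\<Sum>a<length [n,n,m]. \<Sum>b<length [n,n,m]. blk [n,n,m] g a \<bullet> (DB!a!b *\<^sub>v blk [n,n,m] g b))" .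
  have blkv: "blk [n,n,m,n,m] v b = [x,a1,b1,a2,b2]!b" if "b < 5" for b
    unfolding v_def using that x a1c b1c a2c b2c by (intro blk_vcat) (auto simp: nth_Cons')
  have gF: "g = block_mat [n,n,m] [n,n,m,n,m] (tblocks [n,n,m,n,m] [n,n,m] FB) *\<^sub>v v"
    unfolding g_def F_def by (simp only: block_mat_transpose[OF wfF])
  have g0: "blk [n,n,m] g 0 = x"
    unfolding gF
    apply (subst blk_mult[OF wfb_t[OF wfF] vc], simp)
    apply (simp add: tblocks_def blkv FB_def)
    apply (intro eq_vecI) using x a1c b1c a2c b2c apply auto
    done
  have g1: "blk [n,n,m] g (Suc 0) = a2"
    unfolding gF
    apply (subst blk_mult[OF wfb_t[OF wfF] vc], simp)
    apply (simp add: tblocks_def blkv FB_def)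
    apply (intro eq_vecI) using x a1c b1c a2c b2c apply auto
    done
  have g2: "blk [n,n,m] g (Suc (Suc 0)) = b2"
    unfolding gF
    apply (subst blk_mult[OF wfb_t[OF wfF] vc], simp)
    apply (simp add: tblocks_def blkv FB_def)
    apply (intro eq_vecI) using x a1c b1c a2c b2c apply auto
    done
  have q: "v \<bullet> (N2_mat n m \<rho> *\<^sub>v v) = \<rho>\<^sup>2 * (x \<bullet> x) - a2 \<bullet> a2 - b2 \<bullet> b2"
    unfolding e1 using x a2c b2c by (simp add: DB_def g0 g1 g2 smult_mat_vec[of _ n n])
  have p: "x \<bullet> ((\<rho>\<^sup>2 \<cdot>\<^sub>m 1\<^sub>m n - (dA * dA\<^sup>T + dB * dB\<^sup>T)) *\<^sub>v x) = \<rho>\<^sup>2 * (x \<bullet> x) - a2 \<bullet> a2 - b2 \<bullet> b2"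
  proof -
    have c: "\<rho>\<^sup>2 \<cdot>\<^sub>m 1\<^sub>m n \<in> carrier_mat n n" "dA * dA\<^sup>T \<in> carrier_mat n n" "dB * dB\<^sup>T \<in> carrier_mat n n"
      "dA\<^sup>T \<in> carrier_mat n n" "dB\<^sup>T \<in> carrier_mat m n" using dA dB by auto
    have "(\<rho>\<^sup>2 \<cdot>\<^sub>m 1\<^sub>m n - (dA * dA\<^sup>T + dB * dB\<^sup>T)) *\<^sub>v x = \<rho>\<^sup>2 \<cdot>\<^sub>v x - (dA *\<^sub>v a2 + dB *\<^sub>v b2)"
      unfolding minus_mult_distrib_mat_vec[OF c(1) add_carrier_mat[OF c(3)] x]
        add_mult_distrib_mat_vec[OF c(2,3) x] a2 b2
        assoc_mult_mat_vec[OF dA c(4) x] assoc_mult_mat_vec[OF dB c(5) x]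
      using smult_mat_vec[OF one_carrier_mat x, of "\<rho>\<^sup>2"] x by simp
    then have "x \<bullet> ((\<rho>\<^sup>2 \<cdot>\<^sub>m 1\<^sub>m n - (dA * dA\<^sup>T + dB * dB\<^sup>T)) *\<^sub>v x) = x \<bullet> (\<rho>\<^sup>2 \<cdot>\<^sub>v x) - (x \<bullet> (dA *\<^sub>v a2) + x \<bullet> (dB *\<^sub>v b2))"
      using x dA dB a2c b2c by (simp add: scalar_prod_minus_distrib[of x n] scalar_prod_add_distrib[of x n])
    also have "x \<bullet> (dA *\<^sub>v a2) = a2 \<bullet> a2"
      using transpose_vec_mult_scalar[OF dA a2c x] a2 by simp
    also have "x \<bullet> (dB *\<^sub>v b2) = b2 \<bullet> b2"
      using transpose_vec_mult_scalar[OF dB b2c x] b2 by simp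
    finally show ?thesis using x by simp
  qed
  have "x \<bullet> ((\<rho>\<^sup>2 \<cdot>\<^sub>m 1\<^sub>m n - (dA * dA\<^sup>T + dB * dB\<^sup>T)) *\<^sub>v x) \<ge> 0" using psd x unfolding psd_mat_def by blast
  then show ?thesis using p q unfolding v_def by simp
qed


lemma mat_vec_uminus: "A \<in> carrier_mat nr nc \<Longrightarrow> v \<in> carrier_vec nc \<Longrightarrow> A *\<^sub>v (- v) = - (A *\<^sub>v (v::real vec))"
  by (intro eq_vecI) auto

lemma QS:
  fixes x a1 b1 a2 b2 s :: "real vec"
  assumes x: "x \<in> carrier_vec n" and a1c: "a1 \<in> carrier_vec n" and b1c: "b1 \<in> carrier_vec m"
    and a2c: "a2 \<in> carrier_vec n" and b2c: "b2 \<in> carrier_vec m"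
    and P: "P \<in> carrier_mat n n" and PT: "P\<^sup>T = P" and LK: "LK \<in> carrier_mat m n"
    and s: "s \<in> carrier_vec n" and Ps: "P *\<^sub>v s = LK\<^sup>T *\<^sub>v (b1 + b2)"
  shows "vcat [sum_list [n,n,m,n,m], n] [vcat [n,n,m,n,m] [x,a1,b1,a2,b2], -s] \<bullet>
           (S_mat n m \<alpha> P LK \<nu> *\<^sub>v vcat [sum_list [n,n,m,n,m], n] [vcat [n,n,m,n,m] [x,a1,b1,a2,b2], -s])
         = x \<bullet> ((\<alpha> \<cdot>\<^sub>m P - \<nu> \<cdot>\<^sub>m 1\<^sub>m n) *\<^sub>v x) - (a1 + a2) \<bullet> (P *\<^sub>v (a1 + a2))
           - 2 * ((a1 + a2) \<bullet> (LK\<^sup>T *\<^sub>v (b1 + b2))) - s \<bullet> (LK\<^sup>T *\<^sub>v (b1 + b2))"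
proof -
  define z where "z = vcat [sum_list [n,n,m,n,m], n] [vcat [n,n,m,n,m] [x,a1,b1,a2,b2], -s]"
  define SB where "SB = [[\<alpha> \<cdot>\<^sub>m P - \<nu> \<cdot>\<^sub>m 1\<^sub>m n, 0\<^sub>m n n, 0\<^sub>m n m, 0\<^sub>m n n, 0\<^sub>m n m, 0\<^sub>m n n],
      [0\<^sub>m n n, -P, -(LK\<^sup>T), -P, -(LK\<^sup>T), 0\<^sub>m n n],
      [0\<^sub>m m n, -LK, 0\<^sub>m m m, -LK, 0\<^sub>m m m, LK],
      [0\<^sub>m n n, -P, -(LK\<^sup>T), -P, -(LK\<^sup>T), 0\<^sub>m n n],
      [0\<^sub>m m n, -LK, 0\<^sub>m m m, -LK, 0\<^sub>m m m, LK],
      [0\<^sub>m n n, 0\<^sub>m n n, LK\<^sup>T, 0\<^sub>m n n, LK\<^sup>T, P]]"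
  have S: "S_mat n m \<alpha> P LK \<nu> = block_mat [n,n,m,n,m,n] [n,n,m,n,m,n] SB"
    unfolding S_mat_def SB_def ..
  have wfS: "wfb [n,n,m,n,m,n] [n,n,m,n,m,n] SB" using P LK by (simp add: wfb_def SB_def minus_carrier_mat)
  have zc: "z \<in> carrier_vec (sum_list [n,n,m,n,m,n])"
  proof -
    have "sum_list [sum_list [n,n,m,n,m], n] = sum_list [n,n,m,n,m,n]" by simp
    then show ?thesis unfolding z_def by (metis vcat_carrier)
  qed
  have blkz: "blk [n,n,m,n,m,n] z b = [x,a1,b1,a2,b2,-s]!b" if "b < 6" for b
    using blk_vcat2[of b "[n,n,m,n,m]" "[x,a1,b1,a2,b2]" "-s" n] that x a1c b1c a2c b2c s
    unfolding z_def by simp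
  have e: "z \<bullet> (S_mat n m \<alpha> P LK \<nu> *\<^sub>v z) = (\<Sum>a<length [n,n,m,n,m,n]. \<Sum>b<length [n,n,m,n,m,n].
       blk [n,n,m,n,m,n] z a \<bullet> (SB!a!b *\<^sub>v blk [n,n,m,n,m,n] z b))"
    unfolding S by (rule bilin[OF wfS zc zc])
  have dims: "dim_row P = n" "dim_col P = n" "dim_row LK = m" "dim_col LK = n" using P LK by auto
  have E: "z \<bullet> (S_mat n m \<alpha> P LK \<nu> *\<^sub>v z) = x \<bullet> ((\<alpha> \<cdot>\<^sub>m P - \<nu> \<cdot>\<^sub>m 1\<^sub>m n) *\<^sub>v x) +
        (- (a1 \<bullet> (P *\<^sub>v a1)) - a1 \<bullet> (LK\<^sup>T *\<^sub>v b1) - a1 \<bullet> (P *\<^sub>v a2) -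
         a1 \<bullet> (LK\<^sup>T *\<^sub>v b2)) +
        (- (b1 \<bullet> (LK *\<^sub>v a1)) - b1 \<bullet> (LK *\<^sub>v a2) + b1 \<bullet> (LK *\<^sub>v - s)) +
        (- (a2 \<bullet> (P *\<^sub>v a1)) - a2 \<bullet> (LK\<^sup>T *\<^sub>v b1) - a2 \<bullet> (P *\<^sub>v a2) -
         a2 \<bullet> (LK\<^sup>T *\<^sub>v b2)) +
        (- (b2 \<bullet> (LK *\<^sub>v a1)) - b2 \<bullet> (LK *\<^sub>v a2) + b2 \<bullet> (LK *\<^sub>v - s)) +
        (- (s \<bullet> (LK\<^sup>T *\<^sub>v b1)) - s \<bullet> (LK\<^sup>T *\<^sub>v b2) - s \<bullet> (P *\<^sub>v - s))"
    unfolding e using x a1c b1c a2c b2c s dims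
    by (simp add: SB_def blkz)
  have LKT: "LK\<^sup>T \<in> carrier_mat n m" using LK by simp
  have tr: "b \<bullet> (LK *\<^sub>v a) = a \<bullet> (LK\<^sup>T *\<^sub>v b)" if "a \<in> carrier_vec n" "b \<in> carrier_vec m" for a b
  proof -
    have "(LK\<^sup>T *\<^sub>v b) \<bullet> a = b \<bullet> (LK *\<^sub>v a)" by (rule transpose_vec_mult_scalar[OF LK that])
    moreover have "(LK\<^sup>T *\<^sub>v b) \<bullet> a = a \<bullet> (LK\<^sup>T *\<^sub>v b)" by (rule comm_scalar_prod[of _ n]) (use LKT that in auto)
    ultimately show ?thesis by simp
  qed
  have trs: "b \<bullet> (LK *\<^sub>v - s) = - (s \<bullet> (LK\<^sup>T *\<^sub>v b))" if "b \<in> carrier_vec m" for b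
    using tr[OF s that] mat_vec_uminus[OF LK s] that LK by simp
  have c: "LK\<^sup>T *\<^sub>v (b1 + b2) = LK\<^sup>T *\<^sub>v b1 + LK\<^sup>T *\<^sub>v b2" by (rule mult_add_distrib_mat_vec[OF LKT b1c b2c])
  have sc: "s \<bullet> (LK\<^sup>T *\<^sub>v (b1 + b2)) = s \<bullet> (LK\<^sup>T *\<^sub>v b1) + s \<bullet> (LK\<^sup>T *\<^sub>v b2)"
    unfolding c by (rule scalar_prod_add_distrib[of _ n]) (use s LKT b1c b2c in auto)
  have sPs: "s \<bullet> (P *\<^sub>v - s) = - (s \<bullet> (LK\<^sup>T *\<^sub>v (b1 + b2)))"
    using mat_vec_uminus[OF P s] Ps s P LK by simp
  have uPu: "(a1 + a2) \<bullet> (P *\<^sub>v (a1 + a2)) = a1 \<bullet> (P *\<^sub>v a1) + a1 \<bullet> (P *\<^sub>v a2) + a2 \<bullet> (P *\<^sub>v a1) + a2 \<bullet> (P *\<^sub>v a2)"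
    using a1c a2c P
    by (simp add: mult_add_distrib_mat_vec[OF P a1c a2c] add_scalar_prod_distrib[of _ n] scalar_prod_add_distrib[of _ n])
  have uc: "(a1 + a2) \<bullet> (LK\<^sup>T *\<^sub>v (b1 + b2)) = a1 \<bullet> (LK\<^sup>T *\<^sub>v b1) + a1 \<bullet> (LK\<^sup>T *\<^sub>v b2) + a2 \<bullet> (LK\<^sup>T *\<^sub>v b1) + a2 \<bullet> (LK\<^sup>T *\<^sub>v b2)"
    unfolding c using a1c a2c LKT b1c b2c
    by (simp add: add_scalar_prod_distrib[of _ n] scalar_prod_add_distrib[of _ n])
  show ?thesis
    using E[folded z_def] tr[OF a1c b1c] tr[OF a2c b1c] tr[OF a1c b2c] tr[OF a2c b2c] trs[OF b1c] trs[OF b2c] sc sPs uPu uc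
    unfolding z_def by linarith
qed


lemma QP:
  assumes N: "N \<in> carrier_mat (3*n+2*m) (3*n+2*m)" and v: "v \<in> carrier_vec (3*n+2*m)" and y: "y \<in> carrier_vec n"
  shows "vcat [3*n+2*m, n] [v,y] \<bullet> (pad_mat n m N *\<^sub>v vcat [3*n+2*m, n] [v,y]) = v \<bullet> (N *\<^sub>v v)"
proof -
  have wf: "wfb [3*n+2*m, n] [3*n+2*m, n] [[N, 0\<^sub>m (3*n+2*m) n], [0\<^sub>m n (3*n+2*m), 0\<^sub>m n n]]"
    using N by (simp add: wfb_def)
  have zc: "vcat [3*n+2*m, n] [v,y] \<in> carrier_vec (sum_list [3*n+2*m, n])" by (rule vcat_carrier)
  have b0: "blk [3*n+2*m, n] (vcat [3*n+2*m, n] [v,y]) 0 = v" using blk_vcat[of 0 "[3*n+2*m,n]" "[v,y]"] v by simp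
  have b1: "blk [3*n+2*m, n] (vcat [3*n+2*m, n] [v,y]) (Suc 0) = y" using blk_vcat[of 1 "[3*n+2*m,n]" "[v,y]"] y by simp
  show ?thesis unfolding pad_mat_def bilin[OF wf zc zc] using b0 b1 v y N by simp
qed

lemma block_mat_carrier': "sum_list rs = r \<Longrightarrow> sum_list cs = c \<Longrightarrow> block_mat rs cs Bs \<in> carrier_mat r c"
  using block_mat_carrier by metis

lemma sq_nonneg: "(x::real vec) \<bullet> x \<ge> 0"
  unfolding scalar_prod_def by (intro sum_nonneg) auto

lemma transpose_smult': "(k \<cdot>\<^sub>m (A::real mat))\<^sup>T = k \<cdot>\<^sub>m A\<^sup>T"
  by (intro eq_matI) auto

theorem theorem1:
  fixes n m L :: nat and \<alpha> \<beta> \<rho> lam1 lam2 \<nu> :: real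
    and H Hp Xi P LK Pinv :: "real mat"
  assumes dims: "n \<ge> 1" "m \<ge> 1" "L \<ge> 1"
    and alpha: "0 < \<alpha>" "\<alpha> < 1"
    and "\<beta> \<ge> 0" "\<rho> \<ge> 0"
    and H: "H \<in> carrier_mat n L" and Hp: "Hp \<in> carrier_mat n L" and Xi: "Xi \<in> carrier_mat m L"
    and lam: "lam1 \<ge> 0" "lam2 \<ge> 0" and nu: "\<nu> > 0"
    and P: "pd_mat n P" and LK: "LK \<in> carrier_mat m n"
    and LMI: "pd_mat (4*n+2*m)
               (S_mat n m \<alpha> P LK \<nu> - lam1 \<cdot>\<^sub>m pad_mat n m (N1_mat n m L \<beta> H Hp Xi)
                                   - lam2 \<cdot>\<^sub>m pad_mat n m (N2_mat n m \<rho>))"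
    and Pinv: "Pinv \<in> carrier_mat n n" "P * Pinv = 1\<^sub>m n" "Pinv * P = 1\<^sub>m n"
  shows "\<forall>A B dA dB.
           A \<in> carrier_mat n n \<and> B \<in> carrier_mat n m \<and>
           dA \<in> carrier_mat n n \<and> dB \<in> carrier_mat n m \<and>
           (\<exists>W \<in> carrier_mat n L. Hp = A * H + B * Xi + W \<and>
                psd_mat n (\<beta> \<cdot>\<^sub>m 1\<^sub>m n - W * W\<^sup>T)) \<and>
           psd_mat n (\<rho>\<^sup>2 \<cdot>\<^sub>m 1\<^sub>m n - (dA * dA\<^sup>T + dB * dB\<^sup>T))
         \<longrightarrow> (let K = LK * Pinv; Acl = A + B * K + dA + dB * K
              in pd_mat n (\<alpha> \<cdot>\<^sub>m P - Acl * P * Acl\<^sup>T))"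
proof (intro allI impI)
  fix A B dA dB
  assume asm: "A \<in> carrier_mat n n \<and> B \<in> carrier_mat n m \<and>
           dA \<in> carrier_mat n n \<and> dB \<in> carrier_mat n m \<and>
           (\<exists>W \<in> carrier_mat n L. Hp = A * H + B * Xi + W \<and>
                psd_mat n (\<beta> \<cdot>\<^sub>m 1\<^sub>m n - W * W\<^sup>T)) \<and>
           psd_mat n (\<rho>\<^sup>2 \<cdot>\<^sub>m 1\<^sub>m n - (dA * dA\<^sup>T + dB * dB\<^sup>T))"
  then have A: "A \<in> carrier_mat n n" and B: "B \<in> carrier_mat n m" and dA: "dA \<in> carrier_mat n n"
    and dB: "dB \<in> carrier_mat n m" and psd2: "psd_mat n (\<rho>\<^sup>2 \<cdot>\<^sub>m 1\<^sub>m n - (dA * dA\<^sup>T + dB * dB\<^sup>T))"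
    by auto
  from asm obtain W where W: "W \<in> carrier_mat n L" and HW: "Hp = A * H + B * Xi + W"
    and psd1: "psd_mat n (\<beta> \<cdot>\<^sub>m 1\<^sub>m n - W * W\<^sup>T)" by auto
  have Pc: "P \<in> carrier_mat n n" and PT: "P\<^sup>T = P" using P unfolding pd_mat_def by auto
  have Pi: "Pinv \<in> carrier_mat n n" using Pinv by simp
  have PinvT: "Pinv\<^sup>T = Pinv"
  proof -
    have "Pinv\<^sup>T = Pinv\<^sup>T * (P * Pinv)" using Pinv Pi by simp
    also have "\<dots> = (Pinv\<^sup>T * P) * Pinv" using Pi Pc by (simp add: assoc_mult_mat[of _ n n _ n _ n])
    also have "Pinv\<^sup>T * P = (P\<^sup>T * Pinv)\<^sup>T" using Pi Pc by (simp add: transpose_mult[of "P\<^sup>T" n n Pinv n])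
    also have "\<dots> = 1\<^sub>m n" using PT Pinv by simp
    finally show ?thesis using Pi by simp
  qed
  define K where "K = LK * Pinv"
  define Acl where "Acl = A + B * K + dA + dB * K"
  have Kc: "K \<in> carrier_mat m n" unfolding K_def using LK Pi by simp
  have Aclc: "Acl \<in> carrier_mat n n" unfolding Acl_def using A B dA dB Kc by simp
  show "let K = LK * Pinv; Acl = A + B * K + dA + dB * K
              in pd_mat n (\<alpha> \<cdot>\<^sub>m P - Acl * P * Acl\<^sup>T)"
    unfolding Let_def K_def[symmetric] Acl_def[symmetric] pd_mat_def
  proof (intro conjI ballI impI)
    show "\<alpha> \<cdot>\<^sub>m P - Acl * P * Acl\<^sup>T \<in> carrier_mat n n" using Pc Aclc by (simp add: minus_carrier_mat)
  next
    have c1: "Acl * P \<in> carrier_mat n n" using Pc Aclc by simp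
    have AT: "Acl\<^sup>T \<in> carrier_mat n n" using Aclc by simp
    have "(Acl * P * Acl\<^sup>T)\<^sup>T = (Acl\<^sup>T)\<^sup>T * (Acl * P)\<^sup>T" by (rule transpose_mult[OF c1 AT])
    also have "\<dots> = Acl * (P\<^sup>T * Acl\<^sup>T)" by (simp add: transpose_mult[OF Aclc Pc])
    also have "\<dots> = Acl * P * Acl\<^sup>T" using PT Pc Aclc AT by (simp add: assoc_mult_mat[OF Aclc Pc AT])
    finally have "(Acl * P * Acl\<^sup>T)\<^sup>T = Acl * P * Acl\<^sup>T" .
    then show "(\<alpha> \<cdot>\<^sub>m P - Acl * P * Acl\<^sup>T)\<^sup>T = \<alpha> \<cdot>\<^sub>m P - Acl * P * Acl\<^sup>T"
      using Pc Aclc PT by (simp add: transpose_minus[of _ n n] transpose_smult' minus_carrier_mat)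
  next
    fix x :: "real vec" assume x: "x \<in> carrier_vec n" and xnz: "x \<noteq> 0\<^sub>v n"
    define a1 where "a1 = A\<^sup>T *\<^sub>v x"
    define b1 where "b1 = B\<^sup>T *\<^sub>v x"
    define a2 where "a2 = dA\<^sup>T *\<^sub>v x"
    define b2 where "b2 = dB\<^sup>T *\<^sub>v x"
    define c where "c = LK\<^sup>T *\<^sub>v (b1 + b2)"
    define s where "s = Pinv *\<^sub>v c"
    have a1c: "a1 \<in> carrier_vec n" and b1c: "b1 \<in> carrier_vec m" and a2c: "a2 \<in> carrier_vec n"
      and b2c: "b2 \<in> carrier_vec m" unfolding a1_def b1_def a2_def b2_def using A B dA dB x by auto
    have LKT: "LK\<^sup>T \<in> carrier_mat n m" using LK by simp
    have cc: "c \<in> carrier_vec n" unfolding c_def using LKT b1c b2c by simp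
    have sc: "s \<in> carrier_vec n" unfolding s_def using Pi cc by simp
    have Ps: "P *\<^sub>v s = c"
      unfolding s_def using assoc_mult_mat_vec[OF Pc Pi cc, symmetric] Pinv cc by simp
    define v where "v = vcat [n,n,m,n,m] [x,a1,b1,a2,b2]"
    define z where "z = vcat [sum_list [n,n,m,n,m], n] [v, -s]"
    have sum5: "sum_list [n,n,m,n,m] = 3*n+2*m" by simp
    have z': "z = vcat [3*n+2*m, n] [v, -s]" unfolding z_def sum5 ..
    have vc: "v \<in> carrier_vec (3*n+2*m)" unfolding v_def sum5[symmetric] by (rule vcat_carrier)
    have msc: "-s \<in> carrier_vec n" using sc by simp
    have zc: "z \<in> carrier_vec (4*n+2*m)"
    proof -
      have "sum_list [3*n+2*m, n] = 4*n+2*m" by simp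
      then show ?thesis unfolding z' by (metis vcat_carrier)
    qed
    have QSz: "z \<bullet> (S_mat n m \<alpha> P LK \<nu> *\<^sub>v z) = x \<bullet> ((\<alpha> \<cdot>\<^sub>m P - \<nu> \<cdot>\<^sub>m 1\<^sub>m n) *\<^sub>v x) - (a1 + a2) \<bullet> (P *\<^sub>v (a1 + a2))
           - 2 * ((a1 + a2) \<bullet> c) - s \<bullet> c"
      unfolding z_def v_def c_def by (rule QS[OF x a1c b1c a2c b2c Pc PT LK sc Ps[unfolded c_def]])
    have N1c: "N1_mat n m L \<beta> H Hp Xi \<in> carrier_mat (3*n+2*m) (3*n+2*m)"
    proof -
      have "block_mat [n,n,m,n,m] [n,L] [[1\<^sub>m n, Hp], [0\<^sub>m n n, -H], [0\<^sub>m m n, -Xi], [0\<^sub>m n n, 0\<^sub>m n L], [0\<^sub>m m n, 0\<^sub>m m L]]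
         \<in> carrier_mat (3*n+2*m) (n+L)" by (rule block_mat_carrier') simp_all
      moreover have "block_mat [n,L] [n,L] [[\<beta> \<cdot>\<^sub>m 1\<^sub>m n, 0\<^sub>m n L], [0\<^sub>m L n, -(1\<^sub>m L)]] \<in> carrier_mat (n+L) (n+L)"
        by (rule block_mat_carrier') simp_all
      ultimately show ?thesis unfolding N1_mat_def Let_def by auto
    qed
    have N2c: "N2_mat n m \<rho> \<in> carrier_mat (3*n+2*m) (3*n+2*m)"
    proof -
      have "block_mat [n,n,m,n,m] [n,n,m] [[1\<^sub>m n, 0\<^sub>m n n, 0\<^sub>m n m],
                [0\<^sub>m n n, 0\<^sub>m n n, 0\<^sub>m n m],
                [0\<^sub>m m n, 0\<^sub>m m n, 0\<^sub>m m m],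
                [0\<^sub>m n n, 1\<^sub>m n, 0\<^sub>m n m],
                [0\<^sub>m m n, 0\<^sub>m m n, 1\<^sub>m m]]
         \<in> carrier_mat (3*n+2*m) (n+n+m)" by (rule block_mat_carrier') simp_all
      moreover have "block_mat [n,n,m] [n,n,m] [[\<rho>\<^sup>2 \<cdot>\<^sub>m 1\<^sub>m n, 0\<^sub>m n n, 0\<^sub>m n m],
                [0\<^sub>m n n, -(1\<^sub>m n), 0\<^sub>m n m],
                [0\<^sub>m m n, 0\<^sub>m m n, -(1\<^sub>m m)]] \<in> carrier_mat (n+n+m) (n+n+m)"
        by (rule block_mat_carrier') simp_all
      ultimately show ?thesis unfolding N2_mat_def Let_def by auto
    qed
    have q1: "z \<bullet> (pad_mat n m (N1_mat n m L \<beta> H Hp Xi) *\<^sub>v z) \<ge> 0"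
      unfolding z' QP[OF N1c vc msc] unfolding v_def
      by (rule QN1[OF x A B H Hp Xi W HW psd1 a1_def b1_def a2c b2c])
    have q2: "z \<bullet> (pad_mat n m (N2_mat n m \<rho>) *\<^sub>v z) \<ge> 0"
      unfolding z' QP[OF N2c vc msc] unfolding v_def
      by (rule QN2[OF x dA dB psd2 a2_def b2_def a1c b1c])
    have Sc: "S_mat n m \<alpha> P LK \<nu> \<in> carrier_mat (4*n+2*m) (4*n+2*m)"
      unfolding S_mat_def by (rule block_mat_carrier') simp_all
    have padc: "pad_mat n m N \<in> carrier_mat (4*n+2*m) (4*n+2*m)" for N
      unfolding pad_mat_def by (rule block_mat_carrier') simp_all
    have znz: "z \<noteq> 0\<^sub>v (4*n+2*m)"
    proof
      assume z0: "z = 0\<^sub>v (4*n+2*m)"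
      have "blk [n,n,m,n,m,n] z 0 = x"
        using blk_vcat2[of 0 "[n,n,m,n,m]" "[x,a1,b1,a2,b2]" "-s" n] x a1c b1c a2c b2c sc
        unfolding z_def v_def by simp
      moreover have "blk [n,n,m,n,m,n] z 0 = 0\<^sub>v n" unfolding z0 by (intro eq_vecI) (auto simp: blk_def offs_def)
      ultimately show False using xnz by simp
    qed
    define M where "M = S_mat n m \<alpha> P LK \<nu> - lam1 \<cdot>\<^sub>m pad_mat n m (N1_mat n m L \<beta> H Hp Xi) - lam2 \<cdot>\<^sub>m pad_mat n m (N2_mat n m \<rho>)"
    have pos: "z \<bullet> (M *\<^sub>v z) > 0" using LMI zc znz unfolding M_def pd_mat_def by blast
    have Msplit: "z \<bullet> (M *\<^sub>v z) = z \<bullet> (S_mat n m \<alpha> P LK \<nu> *\<^sub>v z) - lam1 * (z \<bullet> (pad_mat n m (N1_mat n m L \<beta> H Hp Xi) *\<^sub>v z))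
        - lam2 * (z \<bullet> (pad_mat n m (N2_mat n m \<rho>) *\<^sub>v z))"
    proof -
      have c1: "lam1 \<cdot>\<^sub>m pad_mat n m (N1_mat n m L \<beta> H Hp Xi) \<in> carrier_mat (4*n+2*m) (4*n+2*m)" using padc by simp
      have c2: "lam2 \<cdot>\<^sub>m pad_mat n m (N2_mat n m \<rho>) \<in> carrier_mat (4*n+2*m) (4*n+2*m)" using padc by simp
      have c3: "S_mat n m \<alpha> P LK \<nu> - lam1 \<cdot>\<^sub>m pad_mat n m (N1_mat n m L \<beta> H Hp Xi) \<in> carrier_mat (4*n+2*m) (4*n+2*m)"
        using Sc c1 by (simp add: minus_carrier_mat)
      have "M *\<^sub>v z = S_mat n m \<alpha> P LK \<nu> *\<^sub>v z - lam1 \<cdot>\<^sub>v (pad_mat n m (N1_mat n m L \<beta> H Hp Xi) *\<^sub>v z)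
           - lam2 \<cdot>\<^sub>v (pad_mat n m (N2_mat n m \<rho>) *\<^sub>v z)"
        unfolding M_def minus_mult_distrib_mat_vec[OF c3 c2 zc] minus_mult_distrib_mat_vec[OF Sc c1 zc]
          smult_mat_vec[OF padc zc] ..
      moreover have v1: "S_mat n m \<alpha> P LK \<nu> *\<^sub>v z \<in> carrier_vec (4*n+2*m)" using Sc zc by simp
      moreover have v4: "pad_mat n m N *\<^sub>v z \<in> carrier_vec (4*n+2*m)" for N using mult_mat_vec_carrier[OF padc zc] .
      moreover have v2: "lam1 \<cdot>\<^sub>v (pad_mat n m (N1_mat n m L \<beta> H Hp Xi) *\<^sub>v z) \<in> carrier_vec (4*n+2*m)" using v4 by simp
      moreover have v3: "lam2 \<cdot>\<^sub>v (pad_mat n m (N2_mat n m \<rho>) *\<^sub>v z) \<in> carrier_vec (4*n+2*m)" using v4 by simp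
      ultimately show ?thesis
        using scalar_prod_minus_distrib[OF zc minus_carrier_vec[OF v1 v2] v3] scalar_prod_minus_distrib[OF zc v1 v2]
          scalar_prod_smult_distrib[OF zc v4] by simp
    qed
    have AclT: "Acl\<^sup>T *\<^sub>v x = (a1 + a2) + s"
    proof -
      have KT: "K\<^sup>T *\<^sub>v y = Pinv *\<^sub>v (LK\<^sup>T *\<^sub>v y)" if y: "y \<in> carrier_vec m" for y
        unfolding K_def transpose_mult[OF LK Pi] PinvT using assoc_mult_mat_vec[OF Pi LKT y] .
      have BK: "B * K \<in> carrier_mat n n" "dB * K \<in> carrier_mat n n" using B dB Kc by auto
      have ABK: "A + B * K \<in> carrier_mat n n" "A + B * K + dA \<in> carrier_mat n n" using A BK dA by auto
      have T: "Acl\<^sup>T = A\<^sup>T + (B * K)\<^sup>T + dA\<^sup>T + (dB * K)\<^sup>T"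
        unfolding Acl_def transpose_add[OF ABK(2) BK(2)] transpose_add[OF ABK(1) dA] transpose_add[OF A BK(1)] ..
      have ct: "A\<^sup>T \<in> carrier_mat n n" "(B * K)\<^sup>T \<in> carrier_mat n n" "dA\<^sup>T \<in> carrier_mat n n" "(dB * K)\<^sup>T \<in> carrier_mat n n"
        "K\<^sup>T \<in> carrier_mat n m" "B\<^sup>T \<in> carrier_mat m n" "dB\<^sup>T \<in> carrier_mat m n"
        using A BK dA Kc B dB by auto
      have "Acl\<^sup>T *\<^sub>v x = A\<^sup>T *\<^sub>v x + (B * K)\<^sup>T *\<^sub>v x + dA\<^sup>T *\<^sub>v x + (dB * K)\<^sup>T *\<^sub>v x"
        unfolding T add_mult_distrib_mat_vec[OF add_carrier_mat[OF ct(3)] ct(4) x]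
          add_mult_distrib_mat_vec[OF add_carrier_mat[OF ct(2)] ct(3) x]
          add_mult_distrib_mat_vec[OF ct(1) ct(2) x] ..
      also have "(B * K)\<^sup>T *\<^sub>v x = Pinv *\<^sub>v (LK\<^sup>T *\<^sub>v b1)"
        unfolding transpose_mult[OF B Kc] assoc_mult_mat_vec[OF ct(5) ct(6) x] b1_def[symmetric]
        by (rule KT[OF b1c])
      also have "(dB * K)\<^sup>T *\<^sub>v x = Pinv *\<^sub>v (LK\<^sup>T *\<^sub>v b2)"
        unfolding transpose_mult[OF dB Kc] assoc_mult_mat_vec[OF ct(5) ct(7) x] b2_def[symmetric]
        by (rule KT[OF b2c])
      finally have e: "Acl\<^sup>T *\<^sub>v x = A\<^sup>T *\<^sub>v x + Pinv *\<^sub>v (LK\<^sup>T *\<^sub>v b1) + dA\<^sup>T *\<^sub>v x + Pinv *\<^sub>v (LK\<^sup>T *\<^sub>v b2)" .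
      have se: "s = Pinv *\<^sub>v (LK\<^sup>T *\<^sub>v b1) + Pinv *\<^sub>v (LK\<^sup>T *\<^sub>v b2)"
        unfolding s_def c_def mult_add_distrib_mat_vec[OF LKT b1c b2c]
        by (rule mult_add_distrib_mat_vec[OF Pi]) (use LKT b1c b2c in auto)
      show ?thesis
        unfolding e se a1_def[symmetric] a2_def[symmetric]
        using a1c a2c Pi LKT b1c b2c by (intro eq_vecI) auto
    qed
    have quad: "x \<bullet> ((Acl * P * Acl\<^sup>T) *\<^sub>v x) = (a1 + a2) \<bullet> (P *\<^sub>v (a1 + a2)) + 2 * ((a1 + a2) \<bullet> c) + s \<bullet> c"
    proof -
      have AT: "Acl\<^sup>T \<in> carrier_mat n n" using Aclc by simp
      have AP: "Acl * P \<in> carrier_mat n n" using Aclc Pc by simp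
      define u where "u = a1 + a2"
      have uc: "u \<in> carrier_vec n" unfolding u_def using a1c a2c by simp
      have y: "Acl\<^sup>T *\<^sub>v x \<in> carrier_vec n" using AT x by simp
      have "(Acl * P * Acl\<^sup>T) *\<^sub>v x = Acl *\<^sub>v (P *\<^sub>v (Acl\<^sup>T *\<^sub>v x))"
        unfolding assoc_mult_mat_vec[OF AP AT x] assoc_mult_mat_vec[OF Aclc Pc y] ..
      then have "x \<bullet> ((Acl * P * Acl\<^sup>T) *\<^sub>v x) = (Acl\<^sup>T *\<^sub>v x) \<bullet> (P *\<^sub>v (Acl\<^sup>T *\<^sub>v x))"
        using transpose_vec_mult_scalar[OF Aclc _ x, of "P *\<^sub>v (Acl\<^sup>T *\<^sub>v x)"] Pc y by simp
      also have "\<dots> = (u + s) \<bullet> (P *\<^sub>v u + c)"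
        unfolding AclT u_def[symmetric] mult_add_distrib_mat_vec[OF Pc uc sc] Ps ..
      also have "\<dots> = u \<bullet> (P *\<^sub>v u) + u \<bullet> c + (s \<bullet> (P *\<^sub>v u) + s \<bullet> c)"
        using uc sc cc Pc
        by (simp add: add_scalar_prod_distrib[of u n s] scalar_prod_add_distrib[of _ n "P *\<^sub>v u" c])
      also have "s \<bullet> (P *\<^sub>v u) = u \<bullet> c"
      proof -
        have "(P\<^sup>T *\<^sub>v s) \<bullet> u = s \<bullet> (P *\<^sub>v u)" by (rule transpose_vec_mult_scalar[OF Pc uc sc])
        then show ?thesis unfolding PT Ps using comm_scalar_prod[OF cc uc] by simp
      qed
      finally show ?thesis unfolding u_def by simp
    qed
    have lhs: "x \<bullet> ((\<alpha> \<cdot>\<^sub>m P - Acl * P * Acl\<^sup>T) *\<^sub>v x) = \<alpha> * (x \<bullet> (P *\<^sub>v x)) - x \<bullet> ((Acl * P * Acl\<^sup>T) *\<^sub>v x)"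
    proof -
      have c: "\<alpha> \<cdot>\<^sub>m P \<in> carrier_mat n n" "Acl * P * Acl\<^sup>T \<in> carrier_mat n n" using Pc Aclc by auto
      show ?thesis unfolding minus_mult_distrib_mat_vec[OF c x] smult_mat_vec[OF Pc x]
        using x Pc c by (simp add: scalar_prod_minus_distrib[of x n])
    qed
    have rhs: "x \<bullet> ((\<alpha> \<cdot>\<^sub>m P - \<nu> \<cdot>\<^sub>m 1\<^sub>m n) *\<^sub>v x) = \<alpha> * (x \<bullet> (P *\<^sub>v x)) - \<nu> * (x \<bullet> x)"
    proof -
      have c: "\<alpha> \<cdot>\<^sub>m P \<in> carrier_mat n n" "\<nu> \<cdot>\<^sub>m 1\<^sub>m n \<in> carrier_mat n n" using Pc by auto
      show ?thesis unfolding minus_mult_distrib_mat_vec[OF c x] smult_mat_vec[OF Pc x] smult_mat_vec[OF one_carrier_mat x]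
        using x Pc c by (simp add: scalar_prod_minus_distrib[of x n])
    qed
    have "lam1 * (z \<bullet> (pad_mat n m (N1_mat n m L \<beta> H Hp Xi) *\<^sub>v z)) \<ge> 0" using lam q1 by simp
    moreover have "lam2 * (z \<bullet> (pad_mat n m (N2_mat n m \<rho>) *\<^sub>v z)) \<ge> 0" using lam q2 by simp
    moreover have "\<nu> * (x \<bullet> x) \<ge> 0" using nu sq_nonneg[of x] by simp
    ultimately show "0 < x \<bullet> ((\<alpha> \<cdot>\<^sub>m P - Acl * P * Acl\<^sup>T) *\<^sub>v x)"
      using pos Msplit QSz quad lhs rhs by linarith
  qed
qed

end
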